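(* Let $L>1$ and let $\mathcal{T}$ be an $L$-increasing tree of any depth $D$, i.e. $c(v)\ge L\,c(u)$ whenever $u$ is an ancestor of $v$. Then the online algorithm \textsc{Noadd} is $\frac{L}{L-1}$-competitive for MLAPD on $\mathcal{T}$.
   Context: Multi-level aggregation problem with deadlines (MLAPD): an instance is a rooted tree $\mathcal{T}$ with root $r$ and positive node costs $c(v)>0$, together with a set $\mathcal{R}$ of requests $\rho=(v,a,d)$, each issued at a node $v$, with arrival time $a$ and deadline $d\ge a$ (deadlines are assumed distinct). A service is a pair $(S,t)$ where $S$ is a subtree of $\mathcal{T}$ containing $r$ and $t$ is the transmission time; it costs $c(S)=\sum_{u\in S}c(u)$. A request $(v,a,d)$ is satisfied by $(S,t)$ if $v\in S$ and $a\le t\le d$. A schedule is a set of services; it is feasible if every request is satisfied; its cost is the sum of its services' costs. Online: requests are revealed at their arrival times. For a request $\rho$ issued at $v$, $P_\rho$ denotes the set of nodes on the path from $r$ to $v$. An algorithm is $c$-competitive if its cost is at most $c$ times the optimal cost on every instance. \textsc{Noadd}: whenever a request $\rho$ that has not yet been satisfied by a previous transmission reaches its deadline $d_\rho$, it transmits $(P_\rho,d_\rho)$ and nothing else. *)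

theory Defs
  imports Complex_Main
begin

definition rooted_tree :: "'v set \<Rightarrow> 'v \<Rightarrow> ('v \<Rightarrow> 'v) \<Rightarrow> bool" where
  "rooted_tree V r par \<longleftrightarrow> finite V \<and> r \<in> V \<and>
     (\<forall>v\<in>V. v \<noteq> r \<longrightarrow> par v \<in> V) \<and>
     (\<forall>v\<in>V. \<exists>n. (par ^^ n) v = r)"

definition depth :: "'v \<Rightarrow> ('v \<Rightarrow> 'v) \<Rightarrow> 'v \<Rightarrow> nat" where
  "depth r par v = (LEAST n. (par ^^ n) v = r)"

definition root_path :: "'v \<Rightarrow> ('v \<Rightarrow> 'v) \<Rightarrow> 'v \<Rightarrow> 'v set" where
  "root_path r par v = {(par ^^ k) v | k. k \<le> depth r par v}"

definition ancestor :: "'v \<Rightarrow> ('v \<Rightarrow> 'v) \<Rightarrow> 'v \<Rightarrow> 'v \<Rightarrow> bool" where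
  "ancestor r par u v \<longleftrightarrow> u \<in> root_path r par v \<and> u \<noteq> v"

definition L_increasing :: "'v set \<Rightarrow> 'v \<Rightarrow> ('v \<Rightarrow> 'v) \<Rightarrow> ('v \<Rightarrow> real) \<Rightarrow> real \<Rightarrow> bool" where
  "L_increasing V r par c L \<longleftrightarrow>
     (\<forall>u\<in>V. \<forall>v\<in>V. ancestor r par u v \<longrightarrow> c v \<ge> L * c u)"

definition root_subtree :: "'v set \<Rightarrow> 'v \<Rightarrow> ('v \<Rightarrow> 'v) \<Rightarrow> 'v set \<Rightarrow> bool" where
  "root_subtree V r par S \<longleftrightarrow> S \<subseteq> V \<and> r \<in> S \<and> (\<forall>u\<in>S. u \<noteq> r \<longrightarrow> par u \<in> S)"

text \<open>Requests (v, a, d): node, arrival time, deadline.\<close>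
type_synonym 'v request = "'v \<times> real \<times> real"
type_synonym 'v service = "'v set \<times> real"

fun req_node :: "'v request \<Rightarrow> 'v" where "req_node (v, a, d) = v"
fun req_arr :: "'v request \<Rightarrow> real" where "req_arr (v, a, d) = a"
fun req_dl :: "'v request \<Rightarrow> real" where "req_dl (v, a, d) = d"

definition mlapd_instance ::
  "'v set \<Rightarrow> 'v \<Rightarrow> ('v \<Rightarrow> 'v) \<Rightarrow> ('v \<Rightarrow> real) \<Rightarrow> 'v request set \<Rightarrow> bool" where
  "mlapd_instance V r par c R \<longleftrightarrow> rooted_tree V r par \<and> (\<forall>v\<in>V. c v > 0) \<and>
     finite R \<and> (\<forall>\<rho>\<in>R. req_node \<rho> \<in> V \<and> req_arr \<rho> \<le> req_dl \<rho>) \<and> inj_on req_dl R"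

definition service_cost :: "('v \<Rightarrow> real) \<Rightarrow> 'v service \<Rightarrow> real" where
  "service_cost c s = sum c (fst s)"

definition satisfies :: "'v service \<Rightarrow> 'v request \<Rightarrow> bool" where
  "satisfies s \<rho> \<longleftrightarrow> req_node \<rho> \<in> fst s \<and> req_arr \<rho> \<le> snd s \<and> snd s \<le> req_dl \<rho>"

definition schedule :: "'v set \<Rightarrow> 'v \<Rightarrow> ('v \<Rightarrow> 'v) \<Rightarrow> 'v service set \<Rightarrow> bool" where
  "schedule V r par \<sigma> \<longleftrightarrow> finite \<sigma> \<and> (\<forall>s\<in>\<sigma>. root_subtree V r par (fst s))"

definition feasible :: "'v set \<Rightarrow> 'v \<Rightarrow> ('v \<Rightarrow> 'v) \<Rightarrow> 'v request set \<Rightarrow> 'v service set \<Rightarrow> bool" where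
  "feasible V r par R \<sigma> \<longleftrightarrow> schedule V r par \<sigma> \<and> (\<forall>\<rho>\<in>R. \<exists>s\<in>\<sigma>. satisfies s \<rho>)"

definition schedule_cost :: "('v \<Rightarrow> real) \<Rightarrow> 'v service set \<Rightarrow> real" where
  "schedule_cost c \<sigma> = (\<Sum>s\<in>\<sigma>. service_cost c s)"

definition noadd_step :: "'v \<Rightarrow> ('v \<Rightarrow> 'v) \<Rightarrow> 'v service set \<Rightarrow> 'v request \<Rightarrow> 'v service set" where
  "noadd_step r par T \<rho> =
     (if \<exists>s\<in>T. satisfies s \<rho> then T else insert (root_path r par (req_node \<rho>), req_dl \<rho>) T)"

definition noadd :: "'v \<Rightarrow> ('v \<Rightarrow> 'v) \<Rightarrow> 'v request set \<Rightarrow> 'v service set" where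
  "noadd r par R = foldl (noadd_step r par) {} (sorted_key_list_of_set req_dl R)"

end

theory Submission
  imports Defs
begin

definition fsvc :: "'v \<Rightarrow> ('v \<Rightarrow> 'v) \<Rightarrow> 'v request \<Rightarrow> 'v service" where
  "fsvc r par \<rho> = (root_path r par (req_node \<rho>), req_dl \<rho>)"

definition pdisj :: "'v request set \<Rightarrow> bool" where
  "pdisj C \<longleftrightarrow> (\<forall>\<rho>1\<in>C. \<forall>\<rho>2\<in>C. \<rho>1 \<noteq> \<rho>2 \<longrightarrow> req_node \<rho>1 = req_node \<rho>2 \<longrightarrow>
      req_dl \<rho>1 < req_arr \<rho>2 \<or> req_dl \<rho>2 < req_arr \<rho>1)"

lemma self_in_root_path: "v \<in> root_path r par v"
  unfolding root_path_def by (rule CollectI, rule exI[of _ 0]) auto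

lemma fold_inv:
  assumes "sorted_wrt (\<lambda>x y. req_dl x < req_dl y) xs"
    and "\<forall>\<rho>'\<in>C. \<forall>\<rho>\<in>set xs. req_dl \<rho>' < req_dl \<rho>"
    and "T = fsvc r par ` C" and "pdisj C"
  shows "\<exists>C'. C' \<subseteq> C \<union> set xs \<and> foldl (noadd_step r par) T xs = fsvc r par ` C' \<and> pdisj C'"
  using assms
proof (induction xs arbitrary: C T)
  case Nil
  then show ?case by auto
next
  case (Cons \<rho> xs)
  show ?case
  proof (cases "\<exists>s\<in>T. satisfies s \<rho>")
    case True
    then have st: "noadd_step r par T \<rho> = T" by (simp add: noadd_step_def)
    from Cons.IH[of C T] Cons.prems obtain C' where
      "C' \<subseteq> C \<union> set xs" "foldl (noadd_step r par) T xs = fsvc r par ` C'" "pdisj C'"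
      by auto
    then show ?thesis using st by (intro exI[of _ C']) auto
  next
    case False
    then have st: "noadd_step r par T \<rho> = fsvc r par ` (insert \<rho> C)"
      using Cons.prems(3) by (simp add: noadd_step_def fsvc_def)
    have pd: "pdisj (insert \<rho> C)"
      unfolding pdisj_def
    proof (intro ballI impI)
      fix \<rho>1 \<rho>2 assume a: "\<rho>1 \<in> insert \<rho> C" "\<rho>2 \<in> insert \<rho> C" "\<rho>1 \<noteq> \<rho>2"
        "req_node \<rho>1 = req_node \<rho>2"
      have key: "req_dl \<rho>' < req_arr \<rho>" if "\<rho>' \<in> C" "req_node \<rho>' = req_node \<rho>" for \<rho>'
      proof -
        have "fsvc r par \<rho>' \<in> T" using that Cons.prems(3) by auto
        then have ns: "\<not> satisfies (fsvc r par \<rho>') \<rho>" using False by auto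
        have lt: "req_dl \<rho>' < req_dl \<rho>" using Cons.prems(2) that by auto
        have "req_node \<rho> \<in> root_path r par (req_node \<rho>')"
          using that self_in_root_path by metis
        then show ?thesis using ns lt by (auto simp: satisfies_def fsvc_def)
      qed
      show "req_dl \<rho>1 < req_arr \<rho>2 \<or> req_dl \<rho>2 < req_arr \<rho>1"
      proof (cases "\<rho>1 = \<rho>")
        case True
        then have "\<rho>2 \<in> C" using a by auto
        then show ?thesis using key a True by auto
      next
        case f1: False
        show ?thesis
        proof (cases "\<rho>2 = \<rho>")
          case True
          then show ?thesis using key a f1 by auto
        next
          case False
          then show ?thesis using Cons.prems(4) a f1 unfolding pdisj_def by auto
        qed
      qed
    qed
    have "\<forall>\<rho>'\<in>insert \<rho> C. \<forall>\<rho>''\<in>set xs. req_dl \<rho>' < req_dl \<rho>''"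
      using Cons.prems(1,2) by auto
    with Cons.IH[of "insert \<rho> C" "fsvc r par ` (insert \<rho> C)"] Cons.prems(1) pd
    obtain C' where
      "C' \<subseteq> insert \<rho> C \<union> set xs" "foldl (noadd_step r par) (fsvc r par ` (insert \<rho> C)) xs = fsvc r par ` C'" "pdisj C'"
      by auto
    then show ?thesis using st by (intro exI[of _ C']) auto
  qed
qed

lemma depth_facts:
  assumes "rooted_tree V r par" "v \<in> V"
  shows "(par ^^ depth r par v) v = r" "\<And>k. k < depth r par v \<Longrightarrow> (par ^^ k) v \<noteq> r"
proof -
  obtain n where "(par ^^ n) v = r" using assms unfolding rooted_tree_def by blast
  then show "(par ^^ depth r par v) v = r" unfolding depth_def by (rule LeastI)
  show "\<And>k. k < depth r par v \<Longrightarrow> (par ^^ k) v \<noteq> r"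
    unfolding depth_def using not_less_Least by blast
qed

lemma path_in_V:
  assumes "rooted_tree V r par" "v \<in> V"
  shows "k \<le> depth r par v \<Longrightarrow> (par ^^ k) v \<in> V"
proof (induction k)
  case 0 then show ?case using assms by simp
next
  case (Suc k)
  then have "(par ^^ k) v \<in> V" "(par ^^ k) v \<noteq> r" using depth_facts[OF assms] by auto
  then show ?case using assms(1) unfolding rooted_tree_def by auto
qed

lemma root_path_sub:
  assumes "rooted_tree V r par" "v \<in> V"
  shows "root_path r par v \<subseteq> V"
proof
  fix u assume "u \<in> root_path r par v"
  then obtain k where k: "u = (par ^^ k) v" "k \<le> depth r par v" unfolding root_path_def by blast
  show "u \<in> V" unfolding k(1) by (rule path_in_V[OF assms k(2)])
qed

lemma par_ancestor:
  assumes "rooted_tree V r par" "w \<in> V" "w \<noteq> r"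
  shows "ancestor r par (par w) w"
proof -
  have "depth r par w \<noteq> 0" using depth_facts(1)[OF assms(1,2)] assms(3) by (metis funpow_0)
  then have "par w \<in> root_path r par w" unfolding root_path_def
    by (intro CollectI exI[of _ 1]) auto
  moreover have "par w \<noteq> w"
  proof
    assume pw: "par w = w"
    have "(par ^^ n) w = w" for n by (induction n) (auto simp: pw)
    then show False using depth_facts(1)[OF assms(1,2)] assms(3) by simp
  qed
  ultimately show ?thesis unfolding ancestor_def by simp
qed

lemma cost_decay:
  assumes "rooted_tree V r par" "v \<in> V" "L_increasing V r par c L" "L > 0"
  shows "k \<le> depth r par v \<Longrightarrow> c ((par ^^ k) v) \<le> c v / L ^ k"
proof (induction k)
  case 0 then show ?case by simp
next
  case (Suc k)
  define w where "w = (par ^^ k) v"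
  have w: "w \<in> V" "w \<noteq> r" using Suc.prems depth_facts(2)[OF assms(1,2)] path_in_V[OF assms(1,2)]
    unfolding w_def by auto
  have pw: "par w \<in> V" using w assms(1) unfolding rooted_tree_def by auto
  have "c w \<ge> L * c (par w)" using assms(3) par_ancestor[OF assms(1) w] w pw
    unfolding L_increasing_def by blast
  then have "c (par w) \<le> c w / L" using assms(4) by (simp add: field_simps)
  also have "\<dots> \<le> (c v / L ^ k) / L" using Suc.IH Suc.prems assms(4) unfolding w_def
    by (intro divide_right_mono) auto
  finally show ?case unfolding w_def by (simp add: field_simps)
qed

lemma geo_bd:
  fixes x :: real
  assumes "0 \<le> x" "x < 1"
  shows "(x ^ n - 1) / (x - 1) \<le> 1 / (1 - x)"
proof -
  have "(x ^ n - 1) / (x - 1) = (1 - x ^ n) / (1 - x)"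
    by (metis minus_diff_eq minus_divide_divide)
  also have "\<dots> \<le> 1 / (1 - x)"
    using assms by (intro divide_right_mono) auto
  finally show ?thesis .
qed

lemma path_cost:
  assumes "rooted_tree V r par" "v \<in> V" "L_increasing V r par c L" "L > 1"
    and pos: "\<forall>u\<in>V. c u > 0"
  shows "sum c (root_path r par v) \<le> L / (L - 1) * c v"
proof -
  let ?D = "depth r par v"
  have rp: "root_path r par v = (\<lambda>k. (par ^^ k) v) ` {..?D}"
    unfolding root_path_def by auto
  have "sum c (root_path r par v) \<le> (\<Sum>k\<le>?D. c ((par ^^ k) v))"
    unfolding rp
  proof -
    have "\<And>i. i \<in> {..?D} \<Longrightarrow> 0 \<le> c ((par ^^ i) v)"
      using path_in_V[OF assms(1,2)] pos by (auto intro: less_imp_le)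
    from sum_image_le[of "{..?D}" c "\<lambda>k. (par ^^ k) v", OF _ this]
    show "sum c ((\<lambda>k. (par ^^ k) v) ` {..?D}) \<le> (\<Sum>k\<le>?D. c ((par ^^ k) v))"
      by (simp add: o_def)
  qed
  also have "\<dots> \<le> (\<Sum>k\<le>?D. c v * (1 / L) ^ k)"
    by (rule sum_mono) (use cost_decay[OF assms(1-3)] assms(4) in \<open>auto simp: power_divide\<close>)
  also have "\<dots> = c v * (\<Sum>k\<le>?D. (1 / L) ^ k)" by (simp add: sum_distrib_left)
  also have "(\<Sum>k\<le>?D. (1 / L) ^ k) \<le> L / (L - 1)"
  proof -
    have ne: "1 / L \<noteq> 1" using assms(4) by simp
    have "(\<Sum>k\<le>?D. (1 / L) ^ k) = (\<Sum>k<Suc ?D. (1 / L) ^ k)" by (simp add: lessThan_Suc_atMost)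
    also have "\<dots> = ((1/L) ^ Suc ?D - 1) / (1/L - 1)" by (rule geometric_sum[OF ne])
    also have "\<dots> \<le> 1 / (1 - 1/L)"
      by (rule geo_bd) (use assms(4) in auto)
    also have "\<dots> = L / (L - 1)" using assms(4) by (simp add: field_simps)
    finally show ?thesis .
  qed
  then have "c v * (\<Sum>k\<le>?D. (1 / L) ^ k) \<le> c v * (L / (L - 1))"
    using pos assms(2) by (intro mult_left_mono) auto
  finally have "sum c (root_path r par v) \<le> c v * (L / (L - 1))" .
  then show ?thesis by (simp only: mult.commute)
qed

lemma ik: "linorder.insort_key ((\<le>)::real\<Rightarrow>real\<Rightarrow>bool) f x (xs::'b list) = insort_key f x xs"
  by (induction xs rule: list.induct) (auto simp: linorder.insort_key.simps[OF linorder_class.linorder_axioms])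

lemma sk: "linorder.sorted_key_list_of_set ((\<le>)::real\<Rightarrow>real\<Rightarrow>bool) f = sorted_key_list_of_set f"
proof -
  have "linorder.insort_key ((\<le>)::real\<Rightarrow>real\<Rightarrow>bool) f = insort_key f" using ik by (intro ext)
  then show ?thesis
  unfolding sorted_key_list_of_set_def linorder.sorted_key_list_of_set_def[OF linorder_class.linorder_axioms]
    by simp
qed

theorem mainTheorem2:
  fixes V :: "'v set" and r :: 'v and par :: "'v \<Rightarrow> 'v" and c :: "'v \<Rightarrow> real"
    and L :: real and R :: "'v request set" and \<sigma> :: "'v service set"
  assumes "L > 1"
    and "mlapd_instance V r par c R"
    and "L_increasing V r par c L"
    and "feasible V r par R \<sigma>"
  shows "schedule_cost c (noadd r par R) \<le> L / (L - 1) * schedule_cost c \<sigma>"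
proof -
  have rt: "rooted_tree V r par" and pos: "\<forall>v\<in>V. c v > 0" and finR: "finite R"
    and nodes: "\<forall>\<rho>\<in>R. req_node \<rho> \<in> V" and inj: "inj_on req_dl R"
    using assms(2) unfolding mlapd_instance_def by auto
  have finV: "finite V" using rt unfolding rooted_tree_def by auto
  have sched: "finite \<sigma>" "\<forall>s\<in>\<sigma>. fst s \<subseteq> V" and sat: "\<forall>\<rho>\<in>R. \<exists>s\<in>\<sigma>. satisfies s \<rho>"
    using assms(4) unfolding feasible_def schedule_def root_subtree_def by auto
  have finfst: "\<forall>s\<in>\<sigma>. finite (fst s)" using sched finV finite_subset by blast
  interpret fik: folding_insort_key "(\<le>)::real\<Rightarrow>real\<Rightarrow>bool" "(<)" R req_dl
    using inj by unfold_locales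
  define xs where "xs = sorted_key_list_of_set req_dl R"
  have setxs: "set xs = R" unfolding xs_def using fik.set_sorted_key_list_of_set[of R, OF order_refl finR] by (simp add: sk)
  have "sorted_wrt (<) (map req_dl xs)" unfolding xs_def using fik.strict_sorted_key_list_of_set[of R, OF order_refl] by (simp add: sk)
  then have srt: "sorted_wrt (\<lambda>x y. req_dl x < req_dl y) xs" by (simp add: sorted_wrt_map)
  from fold_inv[OF srt, of "{}" "{}" r par]
  obtain C where C: "C \<subseteq> R" "noadd r par R = fsvc r par ` C" "pdisj C"
    unfolding noadd_def xs_def[symmetric] using setxs by (auto simp: pdisj_def)
  have finC: "finite C" using C(1) finR finite_subset by auto
  from sat obtain sel where sel: "\<forall>\<rho>\<in>R. sel \<rho> \<in> \<sigma> \<and> satisfies (sel \<rho>) \<rho>"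
    by metis
  define g where "g \<rho> = (sel \<rho>, req_node \<rho>)" for \<rho>
  have injg: "inj_on g C"
  proof (rule inj_onI, rule ccontr)
    fix \<rho>1 \<rho>2 assume a: "\<rho>1 \<in> C" "\<rho>2 \<in> C" "g \<rho>1 = g \<rho>2" "\<rho>1 \<noteq> \<rho>2"
    then have eq: "sel \<rho>1 = sel \<rho>2" "req_node \<rho>1 = req_node \<rho>2" unfolding g_def by auto
    have inR: "\<rho>1 \<in> R" "\<rho>2 \<in> R" using a(1,2) C(1) by auto
    have s1: "satisfies (sel \<rho>1) \<rho>1" using sel inR(1) by blast
    have s2: "satisfies (sel \<rho>1) \<rho>2" using sel inR(2) eq(1) by simp
    have t: "req_arr \<rho>1 \<le> snd (sel \<rho>1)" "snd (sel \<rho>1) \<le> req_dl \<rho>1"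
      "req_arr \<rho>2 \<le> snd (sel \<rho>1)" "snd (sel \<rho>1) \<le> req_dl \<rho>2"
      using s1 s2 unfolding satisfies_def by simp_all
    have "req_dl \<rho>1 < req_arr \<rho>2 \<or> req_dl \<rho>2 < req_arr \<rho>1"
      using C(3) a(1,2,4) eq(2) unfolding pdisj_def by blast
    then show False using t by linarith
  qed
  let ?K = "L / (L - 1)"
  have K0: "?K \<ge> 0" using assms(1) by simp
  have "schedule_cost c (noadd r par R) = (\<Sum>s\<in>fsvc r par ` C. sum c (fst s))"
    unfolding schedule_cost_def service_cost_def C(2) ..
  also have "\<dots> \<le> (\<Sum>\<rho>\<in>C. sum c (root_path r par (req_node \<rho>)))"
  proof -
    have "0 \<le> sum c (fst (fsvc r par \<rho>))" if "\<rho> \<in> C" for \<rho>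
    proof -
      have "root_path r par (req_node \<rho>) \<subseteq> V"
        using root_path_sub[OF rt] nodes C(1) that by blast
      then show ?thesis unfolding fsvc_def using pos
        by (intro sum_nonneg) (auto intro: less_imp_le)
    qed
    from sum_image_le[of C "\<lambda>s. sum c (fst s)" "fsvc r par", OF finC this]
    show ?thesis by (simp add: o_def fsvc_def)
  qed
  also have "\<dots> \<le> (\<Sum>\<rho>\<in>C. ?K * c (req_node \<rho>))"
    by (rule sum_mono) (use path_cost[OF rt _ assms(3) assms(1) pos] nodes C(1) in auto)
  also have "\<dots> = ?K * (\<Sum>\<rho>\<in>C. c (snd (g \<rho>)))"
    by (simp add: sum_distrib_left g_def)
  also have "(\<Sum>\<rho>\<in>C. c (snd (g \<rho>))) = (\<Sum>p\<in>g ` C. c (snd p))"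
    using sum.reindex[OF injg, of "\<lambda>p. c (snd p)"] by (simp add: o_def)
  also have "\<dots> \<le> (\<Sum>p\<in>Sigma \<sigma> fst. c (snd p))"
  proof (rule sum_mono2)
    show "finite (Sigma \<sigma> fst)" using sched finfst by (intro finite_SigmaI) auto
    show "g ` C \<subseteq> Sigma \<sigma> fst"
    proof
      fix p assume "p \<in> g ` C"
      then obtain \<rho> where "\<rho> \<in> C" "p = g \<rho>" by blast
      then have "\<rho> \<in> R" using C(1) by blast
      then have "sel \<rho> \<in> \<sigma>" "req_node \<rho> \<in> fst (sel \<rho>)" using sel unfolding satisfies_def by blast+
      then show "p \<in> Sigma \<sigma> fst" unfolding \<open>p = g \<rho>\<close> g_def by blast
    qed
    show "\<And>p. p \<in> Sigma \<sigma> fst - g ` C \<Longrightarrow> 0 \<le> c (snd p)"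
    proof -
      fix p assume "p \<in> Sigma \<sigma> fst - g ` C"
      then have "fst p \<in> \<sigma>" "snd p \<in> fst (fst p)" by auto
      then have "snd p \<in> V" using sched(2) by blast
      then show "0 \<le> c (snd p)" using pos by (simp add: less_imp_le)
    qed
  qed
  also have "\<dots> = schedule_cost c \<sigma>"
    unfolding schedule_cost_def service_cost_def
    using sum.Sigma[of \<sigma> fst "\<lambda>s u. c u"] sched finfst
    by (simp add: split_def)
  finally show ?thesis using mult_left_mono[OF _ K0] by blast
qed

end
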